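(* Let $A$ be the generator of a $C$-regularized semigroup $\{W(t)\}_{t\ge0}$ on a separable Banach space $X$. Suppose there are a set $Y_0\subset Z(A)$, dense in $X$, and a mapping $S:Y_0\to Y_0$ such that: (1) $e^ASy=y$ for all $y\in Y_0$; (2) $\sum_{n=1}^\infty S^ny$ converges unconditionally for all $y\in Y_0$; (3) $\sum_{n=1}^\infty e^{nA}y$ converges unconditionally for all $y\in Y_0$. If in addition $\operatorname{Im}(C)$ is dense in $X$, then the operator $e^A$ and the semigroup $\{e^{tA}\}_{t\ge0}$ are frequently hypercyclic.
   Context: For a bounded injective operator $C$ on $X$, a strongly continuous family $\{W(t)\}_{t\ge0}\subset B(X)$ is a $C$-regularized semigroup if $W(0)=C$ and $W(t)W(s)=CW(t+s)$ for all $s,t\ge0$. Its generator is $Ax=C^{-1}[\lim_{t\to0}\frac1t(W(t)x-Cx)]$ with domain the set of $x$ for which the limit exists and lies in $\operatorname{Im}(C)$. Define $e^{tA}:=C^{-1}W(t)$ with domain $\{x: W(t)x\in\operatorname{Im}(C)\}$. The solution space is $Z(A)=\{x\in X: W(t)x\in\operatorname{Im}(C)\ \forall t\ge0,\ t\mapsto C^{-1}W(t)x \text{ continuous}\}$. A series $\sum_k x_k$ converges unconditionally if for every $\varepsilon>0$ there is $N$ with $\|\sum_{k\in F}x_k\|<\varepsilon$ for every finite $F\subset\mathbb{N}$ disjoint from $\{1,\dots,N\}$. An operator $T$ is frequently hypercyclic if there is $f\in D(T)$ with $T^nf\in D(T)$ for all $n\ge1$ such that for every non-empty open $U$, $\{n\in\mathbb{N}:T^nf\in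 U\}$ has positive lower density $\liminf_N\#(\cdot\cap\{1,\dots,N\})/N$. The semigroup $\{e^{tA}\}_{t\ge0}$ is frequently hypercyclic if there is $x\in Z(A)$ such that for every non-empty open $U\subset X$, $\liminf_{N\to\infty}\mu(\{t\ge0:e^{tA}x\in U\}\cap[0,N])/N>0$, $\mu$ Lebesgue measure. *)

theory Defs
  imports "HOL-Analysis.Analysis"
begin

text \<open>C-regularized semigroup W (indexed by real t, only t \<ge> 0 matters) with
  bounded injective regularizing operator C.\<close>
definition C_reg_semigroup :: "('a::banach \<Rightarrow> 'a) \<Rightarrow> (real \<Rightarrow> 'a \<Rightarrow> 'a) \<Rightarrow> bool" where
  "C_reg_semigroup C W \<longleftrightarrow>
     bounded_linear C \<and> inj C \<and>
     (\<forall>t\<ge>0. bounded_linear (W t)) \<and>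
     (\<forall>x. continuous_on {0..} (\<lambda>t. W t x)) \<and>
     W 0 = C \<and>
     (\<forall>s\<ge>0. \<forall>t\<ge>0. \<forall>x. W t (W s x) = C (W (t + s) x))"

text \<open>Generator A as a (graph) relation: x \<in> D(A) and A x = y.\<close>
definition generator :: "('a::banach \<Rightarrow> 'a) \<Rightarrow> (real \<Rightarrow> 'a \<Rightarrow> 'a) \<Rightarrow> 'a \<Rightarrow> 'a \<Rightarrow> bool" where
  "generator C W x y \<longleftrightarrow> ((\<lambda>t. (1 / t) *\<^sub>R (W t x - C x)) \<longlongrightarrow> C y) (at_right 0)"

text \<open>e^{tA} := C^{-1} W(t), with domain {x. W t x \<in> Im C}.\<close>
definition expA :: "('a \<Rightarrow> 'a) \<Rightarrow> (real \<Rightarrow> 'a \<Rightarrow> 'a) \<Rightarrow> real \<Rightarrow> 'a \<Rightarrow> 'a" where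
  "expA C W t x = inv_into UNIV C (W t x)"

definition expA_dom :: "('a \<Rightarrow> 'a) \<Rightarrow> (real \<Rightarrow> 'a \<Rightarrow> 'a) \<Rightarrow> real \<Rightarrow> 'a set" where
  "expA_dom C W t = {x. W t x \<in> range C}"

definition solution_space :: "('a::topological_space \<Rightarrow> 'a) \<Rightarrow> (real \<Rightarrow> 'a \<Rightarrow> 'a) \<Rightarrow> 'a set" where
  "solution_space C W = {x. (\<forall>t\<ge>0. W t x \<in> range C) \<and> continuous_on {0..} (\<lambda>t. expA C W t x)}"

definition uncond_conv :: "(nat \<Rightarrow> 'a::real_normed_vector) \<Rightarrow> bool" where
  "uncond_conv x \<longleftrightarrow> (\<forall>\<epsilon>>0. \<exists>N. \<forall>F. finite F \<and> F \<subseteq> {1..} \<and> F \<inter> {1..N} = {}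
       \<longrightarrow> norm (sum x F) < \<epsilon>)"

definition lower_density :: "nat set \<Rightarrow> ereal" where
  "lower_density B = liminf (\<lambda>N. ereal (real (card (B \<inter> {1..N})) / real N))"

definition freq_hypercyclic_op :: "'a set \<Rightarrow> ('a::topological_space \<Rightarrow> 'a) \<Rightarrow> bool" where
  "freq_hypercyclic_op D T \<longleftrightarrow>
     (\<exists>f\<in>D. (\<forall>n\<ge>1. (T ^^ n) f \<in> D) \<and>
        (\<forall>U. open U \<and> U \<noteq> {} \<longrightarrow> lower_density {n. (T ^^ n) f \<in> U} > 0))"

definition freq_hypercyclic_sg :: "('a::topological_space \<Rightarrow> 'a) \<Rightarrow> (real \<Rightarrow> 'a \<Rightarrow> 'a) \<Rightarrow> bool" where
  "freq_hypercyclic_sg C W \<longleftrightarrow>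
     (\<exists>x\<in>solution_space C W. \<forall>U. open U \<and> U \<noteq> {} \<longrightarrow>
        Liminf at_top (\<lambda>N::real. ereal (measure lborel ({t. t \<ge> 0 \<and> expA C W t x \<in> U} \<inter> {0..N}) / N)) > 0)"

end

theory Submission
  imports Defs
begin

lemma card_multiples:
  fixes d J :: nat assumes "d > 0"
  shows "card {i \<in> {1..J}. d dvd i} = J div d"
proof -
  have "{i \<in> {1..J}. d dvd i} = (\<lambda>t. d*t) ` {1..J div d}"
  proof (intro set_eqI iffI)
    fix i assume "i \<in> {i \<in> {1..J}. d dvd i}"
    then obtain t where t: "i = d*t" "1 \<le> i" "i \<le> J" by (auto elim!: dvdE)
    hence "1 \<le> t" by (cases t) auto
    moreover have "t \<le> J div d"
    proof -
      have "d*t \<le> J" using t by simp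
      hence "d*t div d \<le> J div d" by (rule div_le_mono)
      thus ?thesis using assms by simp
    qed
    ultimately show "i \<in> (\<lambda>t. d*t) ` {1..J div d}" using t by (intro image_eqI[of _ _ t]) auto
  next
    fix i assume "i \<in> (\<lambda>t. d*t) ` {1..J div d}"
    then obtain t where t0: "t \<in> {1..J div d}" and t1: "i = d*t" by (rule imageE) blast
    hence t: "i = d*t" "1 \<le> t" "t \<le> J div d" by auto
    have "d * t \<le> d * (J div d)" using t by simp
    also have "\<dots> \<le> J" by simp
    finally have "i \<le> J" using t by simp
    moreover have "1 \<le> i" using t assms by simp
    ultimately show "i \<in> {i \<in> {1..J}. d dvd i}" unfolding t(1) by simp
  qed
  moreover have "inj_on (\<lambda>t. d*t) {1..J div d}" using assms by (auto simp: inj_on_def)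
  ultimately show ?thesis by (simp add: card_image)
qed

lemma real_div_ge:
  fixes n d :: nat assumes "d > 0"
  shows "real n / real d - 1 \<le> real (n div d)"
proof -
  have "real n = real (d * (n div d) + n mod d)" by (simp only: mult_div_mod_eq)
  also have "\<dots> = real d * real (n div d) + real (n mod d)" by (simp only: of_nat_add of_nat_mult)
  finally have "real n = real d * real (n div d) + real (n mod d)" .
  moreover have "real (n mod d) < real d" using assms by simp
  ultimately have "real n < real d * (real (n div d) + 1)" by (simp add: algebra_simps)
  hence "real n / real d < real (n div d) + 1" using assms by (simp add: field_simps)
  thus ?thesis by simp
qed

fun Dseq :: "(nat \<Rightarrow> nat) \<Rightarrow> nat \<Rightarrow> nat" where
  "Dseq G 0 = 1"
| "Dseq G (Suc l) = Dseq G l * (2 * G (Suc l))"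

locale comb =
  fixes G :: "nat \<Rightarrow> nat"
  assumes Gpos: "\<And>l. G l \<ge> 1"
begin

lemma Dseq_ge: "Dseq G l \<ge> 2 ^ l"
proof (induction l)
  case (Suc l)
  have "2 ^ Suc l = 2 ^ l * (2::nat)" by (simp add: mult.commute)
  also have "\<dots> \<le> Dseq G l * (2 * G (Suc l))"
    using Suc Gpos[of "Suc l"] by (intro mult_mono) auto
  finally show ?case by simp
qed simp

lemma Dseq_pos: "Dseq G l > 0"
proof -
  have "(1::nat) \<le> 2 ^ l" by simp
  thus ?thesis using Dseq_ge[of l] by linarith
qed

lemma Dseq_G: "l \<ge> 1 \<Longrightarrow> 2 ^ l * G l \<le> Dseq G l"
proof (cases l)
  case (Suc k)
  have "2 ^ Suc k * G (Suc k) = 2 ^ k * (2 * G (Suc k))" by simp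
  also have "\<dots> \<le> Dseq G k * (2 * G (Suc k))" using Dseq_ge[of k] by simp
  finally show ?thesis using Suc by simp
qed simp

lemma Dseq_dvd: "l \<le> l' \<Longrightarrow> Dseq G l dvd Dseq G l'"
proof (induction l' rule: dec_induct)
  case (step n) then show ?case by (simp add: dvd_mult2)
qed simp

definition lv :: "nat \<Rightarrow> nat" where
  "lv i = (LEAST l. \<not> Dseq G (Suc l) dvd i)"

lemma lv_ex: "i \<ge> 1 \<Longrightarrow> \<not> Dseq G (Suc i) dvd i"
proof
  assume "i \<ge> 1" "Dseq G (Suc i) dvd i"
  hence "Dseq G (Suc i) \<le> i" by (intro dvd_imp_le) auto
  moreover have "i < 2 ^ Suc i" by (induction i) auto
  ultimately show False using Dseq_ge[of "Suc i"] by linarith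
qed

lemma lv_props:
  assumes "i \<ge> 1"
  shows "Dseq G (lv i) dvd i" "\<not> Dseq G (Suc (lv i)) dvd i"
proof -
  show "\<not> Dseq G (Suc (lv i)) dvd i"
    unfolding lv_def using LeastI[of "\<lambda>l. \<not> Dseq G (Suc l) dvd i", OF lv_ex[OF assms]] .
  show "Dseq G (lv i) dvd i"
  proof (cases "lv i")
    case (Suc k)
    have "k < lv i" using Suc by simp
    hence "\<not> \<not> Dseq G (Suc k) dvd i" unfolding lv_def by (rule not_less_Least)
    thus ?thesis using Suc by simp
  qed simp
qed

lemma lv_iff:
  assumes "i \<ge> 1"
  shows "lv i = l \<longleftrightarrow> Dseq G l dvd i \<and> \<not> Dseq G (Suc l) dvd i"
proof
  assume "lv i = l" thus "Dseq G l dvd i \<and> \<not> Dseq G (Suc l) dvd i" using lv_props[OF assms] by simp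
next
  assume h: "Dseq G l dvd i \<and> \<not> Dseq G (Suc l) dvd i"
  have "lv i \<le> l" unfolding lv_def using h by (intro Least_le) simp
  moreover have "\<not> lv i < l"
  proof
    assume "lv i < l"
    hence "Dseq G (Suc (lv i)) dvd Dseq G l" by (intro Dseq_dvd) simp
    hence "Dseq G (Suc (lv i)) dvd i" using h dvd_trans by blast
    thus False using lv_props(2)[OF assms] by simp
  qed
  ultimately show "lv i = l" by simp
qed

lemma lv_less: "i \<ge> 1 \<Longrightarrow> lv i < i"
proof -
  assume i: "i \<ge> 1"
  have "Dseq G (lv i) \<le> i" using lv_props(1)[OF i] i by (intro dvd_imp_le) auto
  hence "2 ^ lv i \<le> i" using Dseq_ge[of "lv i"] by linarith
  moreover have "lv i < 2 ^ lv i" by (rule less_exp)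
  ultimately show ?thesis by linarith
qed

definition FF :: "nat \<Rightarrow> nat" where "FF J = (\<Sum>i\<in>{1..J}. G (lv i))"

lemma FF_Suc: "FF (Suc J) = FF J + G (lv (Suc J))"
  unfolding FF_def by simp

lemma FF_mono: "J \<le> J' \<Longrightarrow> FF J \<le> FF J'"
  unfolding FF_def by (intro sum_mono2) auto

definition ff :: "nat \<Rightarrow> nat" where "ff j = FF (Suc j) + FF j"
definition vv :: "nat \<Rightarrow> nat" where "vv j = lv (Suc j)"

lemma ff_sep: "i < j \<Longrightarrow> ff i + G (vv i) + G (vv j) \<le> ff j"
proof -
  assume "i < j"
  hence "FF (Suc i) \<le> FF j" by (intro FF_mono) simp
  thus ?thesis unfolding ff_def vv_def FF_Suc by simp
qed

lemma ff_ge: "G (vv j) \<le> ff j"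
  unfolding ff_def vv_def FF_Suc by simp

lemma ff_strict_mono: "strict_mono ff"
proof (rule strict_monoI)
  fix i j :: nat assume "i < j"
  thus "ff i < ff j" using ff_sep[of i j] Gpos[of "vv i"] by linarith
qed

lemma card_level:
  "card {i \<in> {1..J}. lv i = l} = J div Dseq G l - J div Dseq G (Suc l)"
proof -
  define A where "A = {i \<in> {1..J}. Dseq G l dvd i}"
  define B where "B = {i \<in> {1..J}. Dseq G (Suc l) dvd i}"
  have eq: "{i \<in> {1..J}. lv i = l} = A - B"
    unfolding A_def B_def using lv_iff by auto
  have sub: "B \<subseteq> A"
    unfolding A_def B_def using Dseq_dvd[of l "Suc l"] by (auto intro: dvd_trans)
  have fin: "finite B" unfolding B_def by simp
  have "card (A - B) = card A - card B" by (rule card_Diff_subset[OF fin sub])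
  moreover have "card A = J div Dseq G l" unfolding A_def by (rule card_multiples[OF Dseq_pos])
  moreover have "card B = J div Dseq G (Suc l)" unfolding B_def by (rule card_multiples[OF Dseq_pos])
  ultimately show ?thesis using eq by simp
qed

lemma FF_bound: "real (FF J) \<le> (real (G 0) + 2) * real J"
proof -
  have "FF J = (\<Sum>l\<in>lv ` {1..J}. (\<Sum>i\<in>{i \<in> {1..J}. lv i = l}. G (lv i)))"
    unfolding FF_def by (rule sum.image_gen) simp
  also have "\<dots> = (\<Sum>l\<in>lv ` {1..J}. G l * card {i \<in> {1..J}. lv i = l})"
    by (intro sum.cong refl) simp
  finally have "real (FF J) = (\<Sum>l\<in>lv ` {1..J}. real (G l) * real (card {i \<in> {1..J}. lv i = l}))"
    by simp
  also have "\<dots> \<le> (\<Sum>l\<in>lv ` {1..J}. real (G l) * (real J / real (Dseq G l)))"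
  proof (rule sum_mono)
    fix l assume "l \<in> lv ` {1..J}"
    have "card {i \<in> {1..J}. lv i = l} \<le> card {i \<in> {1..J}. Dseq G l dvd i}"
      using lv_props by (intro card_mono) auto
    hence "real (card {i \<in> {1..J}. lv i = l}) \<le> real (J div Dseq G l)"
      using card_multiples[OF Dseq_pos] by simp
    also have "\<dots> \<le> real J / real (Dseq G l)" by (rule of_nat_div_le_of_nat)
    finally show "real (G l) * real (card {i \<in> {1..J}. lv i = l}) \<le> real (G l) * (real J / real (Dseq G l))"
      by (intro mult_left_mono) auto
  qed
  also have "\<dots> \<le> (\<Sum>l\<in>{..<J}. real (G l) * (real J / real (Dseq G l)))"
  proof (rule sum_mono2)
    show "lv ` {1..J} \<subseteq> {..<J}"
    proof
      fix l assume "l \<in> lv ` {1..J}"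
      then obtain i where "i \<in> {1..J}" "l = lv i" by blast
      thus "l \<in> {..<J}" using lv_less[of i] by auto
    qed
  qed auto
  also have "\<dots> \<le> (\<Sum>l\<in>{..<J}. real J * ((if l = 0 then real (G 0) else 0) + (1/2)^l))"
  proof (intro sum_mono)
    fix l
    show "real (G l) * (real J / real (Dseq G l)) \<le> real J * ((if l = 0 then real (G 0) else 0) + (1/2)^l)"
    proof (cases "l = 0")
      case False
      have "real (2 ^ l * G l) \<le> real (Dseq G l)" using Dseq_G False by (simp only: of_nat_le_iff)
      hence d: "2 ^ l * real (G l) \<le> real (Dseq G l)" by simp
      have "real (G l) / real (Dseq G l) \<le> (1/2) ^ l"
        using d Dseq_pos[of l] by (simp add: divide_simps power_one_over mult.commute)
      hence "real J * (real (G l) / real (Dseq G l)) \<le> real J * (1/2)^l" by (intro mult_left_mono) auto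
      thus ?thesis using False by (simp add: mult.commute)
    qed (simp add: algebra_simps)
  qed
  also have "\<dots> = real J * (\<Sum>l\<in>{..<J}. ((if l = 0 then real (G 0) else 0) + (1/2)^l))"
    by (simp add: sum_distrib_left)
  also have "\<dots> \<le> real J * (real (G 0) + 2)"
  proof (intro mult_left_mono)
    have "(\<Sum>l\<in>{..<J}. ((if l = 0 then real (G 0) else 0) + (1/2::real)^l))
        = (\<Sum>l\<in>{..<J}. (if l = 0 then real (G 0) else 0)) + (\<Sum>l\<in>{..<J}. (1/2::real)^l)"
      by (simp add: sum.distrib)
    also have "(\<Sum>l\<in>{..<J}. (if l = 0 then real (G 0) else 0)) \<le> real (G 0)"
      by (simp add: sum.delta' )
    also have "(\<Sum>l\<in>{..<J}. (1/2::real)^l) \<le> (\<Sum>l. (1/2::real)^l)"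
      by (intro sum_le_suminf summable_geometric) auto
    also have "(\<Sum>l. (1/2::real)^l) = 2" using suminf_geometric[of "1/2::real"] by simp
    finally show "(\<Sum>l\<in>{..<J}. ((if l = 0 then real (G 0) else 0) + (1/2::real)^l)) \<le> real (G 0) + 2"
      by simp
  qed simp
  finally show ?thesis by (simp add: mult.commute)
qed


lemma vv_suc: "i \<ge> 1 \<Longrightarrow> vv (i - 1) = lv i"
  unfolding vv_def by simp

end

context comb begin
lemma density_level:
  "\<exists>c>0. \<exists>N0. \<forall>N\<ge>N0. c * real N \<le> real (card {j. vv j = l \<and> ff j \<le> N})"
proof -
  define K where "K = G 0 + 2"
  define a where "a = Dseq G l"
  define b where "b = 2 * G (Suc l)"
  have Kpos: "K > 0" and apos: "a > 0" and b2: "b \<ge> 2"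
    using Dseq_pos Gpos[of "Suc l"] unfolding K_def a_def b_def by auto
  define c where "c = 1 / (8 * real K * real a)"
  have cpos: "c > 0" using Kpos apos unfolding c_def by simp
  have "\<forall>N\<ge>16 * K * a. c * real N \<le> real (card {j. vv j = l \<and> ff j \<le> N})"
  proof (intro allI impI)
    fix N :: nat assume N: "N \<ge> 16 * K * a"
    define J where "J = N div (2 * K)"
    define P where "P = {i \<in> {1..J}. lv i = l}"
    define T where "T = {j. vv j = l \<and> ff j \<le> N}"
    have finT: "finite T"
    proof (rule finite_subset)
      show "T \<subseteq> {..N}" unfolding T_def
        using strict_mono_imp_increasing[OF ff_strict_mono] by (auto intro: order_trans)
    qed simp
    have sub: "(\<lambda>i. i - 1) ` P \<subseteq> T"
    proof
      fix j assume "j \<in> (\<lambda>i. i - 1) ` P"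
      then obtain i where i: "i \<in> P" "j = i - 1" by blast
      have i1: "i \<ge> 1" "i \<le> J" "lv i = l" using i unfolding P_def by auto
      have "vv j = l" using i i1 vv_suc by simp
      have "real (FF i) \<le> real K * real i"
        using FF_bound[of i] unfolding K_def by (simp add: add.commute)
      also have "\<dots> \<le> real K * real J" using i1 by (intro mult_left_mono) auto
      finally have "FF i \<le> K * J" by (simp only: of_nat_mult[symmetric] of_nat_le_iff)
      moreover have "ff j \<le> 2 * FF i"
        unfolding ff_def using i(2) i1 FF_mono[of j "Suc j"] by simp
      moreover have "2 * K * J \<le> N" unfolding J_def by simp
      ultimately have "ff j \<le> 2 * (K * J)" "2 * (K * J) \<le> N" by (linarith, simp add: mult.assoc)
      hence "ff j \<le> N" by linarith
      thus "j \<in> T" unfolding T_def using \<open>vv j = l\<close> by simp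
    qed
    have inj: "inj_on (\<lambda>i. i - 1) P" unfolding P_def inj_on_def by auto
    have "card P \<le> card T"
      using card_mono[OF finT sub] card_image[OF inj] by simp
    have cardP: "card P = J div a - J div (a * b)"
      unfolding P_def a_def b_def using card_level by simp
    have le: "J div (a * b) \<le> J div a" using b2 by (intro div_le_mono2) (use apos in auto)
    have r1: "real J / real a - 1 \<le> real (J div a)" by (rule real_div_ge) (use apos in simp)
    have "real (J div (a * b)) \<le> real J / real (a * b)" by (rule of_nat_div_le_of_nat)
    also have "\<dots> \<le> real J / (2 * real a)"
      using b2 apos by (intro divide_left_mono) auto
    finally have r2: "real (J div (a * b)) \<le> real J / (2 * real a)" .
    have "real (card P) = real (J div a) - real (J div (a * b))"
      using cardP le by (simp add: of_nat_diff)
    hence cP: "real (card P) \<ge> real J / (2 * real a) - 1"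
      using r1 r2 by linarith
    have rJ: "real J \<ge> real N / (2 * real K) - 1"
      using real_div_ge[of "2 * K" N] Kpos unfolding J_def by simp
    have "real J / (2 * real a) - 1 \<ge> (real N / (2 * real K) - 1) / (2 * real a) - 1"
      using rJ apos by (simp add: divide_right_mono)
    moreover have "(real N / (2 * real K) - 1) / (2 * real a) - 1 \<ge> c * real N"
    proof -
      have NN: "real N \<ge> 16 * real K * real a" using N by (metis of_nat_le_iff of_nat_mult of_nat_numeral)
      have "(real N / (2 * real K) - 1) / (2 * real a) - 1 - c * real N
            = real N / (8 * real K * real a) - 1 / (2 * real a) - 1"
        unfolding c_def using Kpos apos by (simp add: field_simps)
      also have "real N / (8 * real K * real a) \<ge> 2"
        using NN Kpos apos by (simp add: field_simps)
      moreover have "1 / (2 * real a) \<le> 1" using apos by simp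
      ultimately show ?thesis by linarith
    qed
    ultimately show "c * real N \<le> real (card {j. vv j = l \<and> ff j \<le> N})"
      using cP \<open>card P \<le> card T\<close> unfolding T_def by linarith
  qed
  thus ?thesis using cpos by blast
qed

end

lemma dense_seq:
  fixes Y :: "'a::second_countable_topology set"
  assumes "closure Y = UNIV"
  shows "\<exists>d::nat\<Rightarrow>'a. (\<forall>i. d i \<in> Y) \<and> (\<forall>U. open U \<and> U \<noteq> {} \<longrightarrow> (\<exists>i. d i \<in> U))"
proof -
  obtain B :: "'a set set" where B: "countable B" "topological_basis B"
    using ex_countable_basis by blast
  have meet: "U \<inter> Y \<noteq> {}" if "open U" "U \<noteq> {}" for U
    using open_Int_closure_eq_empty[OF that(1), of Y] that assms by auto
  define D where "D = (\<lambda>b. SOME y. y \<in> b \<inter> Y) ` {b\<in>B. b \<noteq> {}}"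
  have pick: "(SOME y. y \<in> b \<inter> Y) \<in> b \<inter> Y" if "b \<in> B" "b \<noteq> {}" for b
  proof -
    have "b \<inter> Y \<noteq> {}" using meet[OF topological_basis_open[OF B(2) that(1)] that(2)] .
    then obtain y where "y \<in> b \<inter> Y" by blast
    thus ?thesis by (rule someI)
  qed
  have Dsub: "D \<subseteq> Y"
  proof
    fix y assume "y \<in> D"
    then obtain b where b: "b \<in> B" "b \<noteq> {}" "y = (SOME y. y \<in> b \<inter> Y)" unfolding D_def by blast
    show "y \<in> Y" using pick[OF b(1,2)] b(3) by simp
  qed
  have Dhit: "\<exists>y\<in>D. y \<in> U" if U: "open U" "U \<noteq> {}" for U
  proof -
    obtain x where x: "x \<in> U" using U by blast
    obtain b where b: "b \<in> B" "x \<in> b" "b \<subseteq> U" by (rule topological_basisE[OF B(2) U(1) x])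
    hence bne: "b \<noteq> {}" by blast
    hence "(SOME y. y \<in> b \<inter> Y) \<in> D" unfolding D_def using b(1) by (intro imageI) simp
    moreover have "(SOME y. y \<in> b \<inter> Y) \<in> U" using pick[OF b(1) bne] b(3) by blast
    ultimately show ?thesis by blast
  qed
  have Dne: "D \<noteq> {}" using Dhit[of UNIV] by auto
  have cD: "countable D" unfolding D_def using B(1) by simp
  define d where "d = from_nat_into D"
  have "\<forall>i. d i \<in> Y" unfolding d_def using from_nat_into[OF Dne] Dsub by blast
  moreover have "\<forall>U. open U \<and> U \<noteq> {} \<longrightarrow> (\<exists>i. d i \<in> U)"
  proof (intro allI impI)
    fix U :: "'a set" assume "open U \<and> U \<noteq> {}"
    then obtain y where "y \<in> D" "y \<in> U" using Dhit by blast
    hence "d (to_nat_on D y) \<in> U" unfolding d_def using cD by simp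
    thus "\<exists>i. d i \<in> U" by (rule exI)
  qed
  ultimately have H: "(\<forall>i. d i \<in> Y) \<and> (\<forall>U. open U \<and> U \<noteq> {} \<longrightarrow> (\<exists>i. d i \<in> U))"
    by (rule conjI)
  show ?thesis by (rule exI[of _ d]) (rule H)
qed

lemma uniform_bound:
  fixes W :: "real \<Rightarrow> 'a::banach \<Rightarrow> 'b::real_normed_vector"
  assumes lin: "\<And>s. s \<in> K \<Longrightarrow> bounded_linear (W s)"
    and ptw: "\<And>z. \<exists>B. \<forall>s\<in>K. norm (W s z) \<le> B"
  shows "\<exists>B>0. \<forall>s\<in>K. \<forall>z. norm (W s z) \<le> B * norm z"
proof -
  define F where "F k = {z. \<forall>s\<in>K. norm (W s z) \<le> real k}" for k :: nat
  have clF: "closed (F k)" for k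
  proof -
    have "F k = (\<Inter>s\<in>K. {z. norm (W s z) \<le> real k})" unfolding F_def by auto
    moreover have "closed {z. norm (W s z) \<le> real k}" if "s \<in> K" for s
    proof (rule closed_Collect_le)
      show "continuous_on UNIV (\<lambda>z. norm (W s z))"
        using lin[OF that] by (intro continuous_on_norm linear_continuous_on)
    qed simp
    ultimately show ?thesis by auto
  qed
  have cover: "(\<Union>k. F k) = UNIV"
  proof -
    have "z \<in> (\<Union>k. F k)" for z
    proof -
      obtain B where B: "\<forall>s\<in>K. norm (W s z) \<le> B" using ptw by blast
      obtain k :: nat where "B \<le> real k" using real_arch_simple by blast
      hence "z \<in> F k" unfolding F_def using B by force
      thus ?thesis by blast
    qed
    thus ?thesis by blast
  qed
  have "\<exists>k. euclidean interior_of (F k) \<noteq> {}"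
  proof (rule ccontr)
    assume H: "\<not> (\<exists>k. euclidean interior_of (F k) \<noteq> {})"
    have "euclidean interior_of \<Union>(range F) = {}"
    proof (rule Baire_category_alt)
      show "completely_metrizable_space (euclidean :: 'a topology) \<or> locally_compact_space (euclidean :: 'a topology) \<and> regular_space (euclidean :: 'a topology)"
        by (rule disjI1, rule completely_metrizable_space_euclidean)
      show "countable (range F)" by simp
      fix T assume "T \<in> range F"
      then obtain k where k: "T = F k" by (rule rangeE)
      show "closedin euclidean T \<and> euclidean interior_of T = {}"
        using closed_closedin[THEN iffD1, OF clF[of k]] H unfolding k by blast
    qed
    thus False using cover by simp
  qed
  then obtain k where k: "euclidean interior_of (F k) \<noteq> {}" by (rule exE)
  then obtain z0 where z0: "z0 \<in> euclidean interior_of (F k)" by (meson equals0I)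
  have "\<exists>Op. openin euclidean Op \<and> z0 \<in> Op \<and> Op \<subseteq> F k"
    using z0 unfolding interior_of_def by (rule CollectD)
  then obtain Op where Op0: "openin euclidean Op" "z0 \<in> Op" "Op \<subseteq> F k" by (elim exE conjE)
  have "open Op" using Op0(1) by (rule open_openin[THEN iffD2])
  hence Op: "open Op" "z0 \<in> Op" "Op \<subseteq> F k" using Op0 by auto
  then obtain \<rho> where \<rho>: "\<rho> > 0" "ball z0 \<rho> \<subseteq> F k" by (meson open_contains_ball subset_trans)
  define B where "B = 4 * real k / \<rho> + 1"
  have "4 * real k / \<rho> \<ge> 0" using \<rho> by simp
  hence Bpos: "B > 0" unfolding B_def by linarith
  have "\<forall>s\<in>K. \<forall>z. norm (W s z) \<le> B * norm z"
  proof (intro ballI allI)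
    fix s z assume s: "s \<in> K"
    interpret L: bounded_linear "W s" by (rule lin[OF s])
    show "norm (W s z) \<le> B * norm z"
    proof (cases "z = 0")
      case True thus ?thesis by simp
    next
      case False
      define w where "w = (\<rho> / (2 * norm z)) *\<^sub>R z"
      have nw: "norm w = \<rho> / 2" unfolding w_def using False \<rho> by simp
      have "z0 + w \<in> ball z0 \<rho>" using nw \<rho> by (simp add: dist_norm)
      hence a: "norm (W s (z0 + w)) \<le> real k" using \<rho>(2) s unfolding F_def by blast
      have "z0 \<in> ball z0 \<rho>" using \<rho>(1) by simp
      hence "z0 \<in> F k" using \<rho>(2) by (rule subsetD[rotated])
      hence b: "norm (W s z0) \<le> real k" using s unfolding F_def by blast
      have "W s w = W s (z0 + w) - W s z0" by (simp add: L.add)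
      hence nW: "norm (W s w) \<le> 2 * real k" using a b norm_triangle_ineq4[of "W s (z0 + w)" "W s z0"] by simp
      have "z = (2 * norm z / \<rho>) *\<^sub>R w" unfolding w_def using False \<rho> by simp
      hence "W s z = (2 * norm z / \<rho>) *\<^sub>R W s w" by (metis L.scaleR)
      hence "norm (W s z) = (2 * norm z / \<rho>) * norm (W s w)" using \<rho> by simp
      also have "\<dots> \<le> (2 * norm z / \<rho>) * (2 * real k)" using nW \<rho> by (intro mult_left_mono) auto
      also have "\<dots> = (4 * real k / \<rho>) * norm z" by (simp add: field_simps)
      also have "\<dots> \<le> B * norm z" unfolding B_def by (simp add: distrib_right)
      finally show ?thesis .
    qed
  qed
  thus ?thesis using Bpos by blast
qed

lemma ld_pos:
  assumes "c > 0" "\<And>N. N \<ge> N0 \<Longrightarrow> c * real N \<le> real (card (B \<inter> {1..N}))"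
  shows "lower_density B > 0"
proof -
  have "eventually (\<lambda>N. ereal c \<le> ereal (real (card (B \<inter> {1..N})) / real N)) sequentially"
  proof (rule eventually_sequentiallyI[of "max N0 1"])
    fix N assume "N \<ge> max N0 1"
    hence "c * real N \<le> real (card (B \<inter> {1..N}))" "real N > 0" using assms(2) by auto
    hence "c \<le> real (card (B \<inter> {1..N})) / real N" by (simp add: le_divide_eq)
    thus "ereal c \<le> ereal (real (card (B \<inter> {1..N})) / real N)" by simp
  qed
  hence "ereal c \<le> lower_density B" unfolding lower_density_def by (rule Liminf_bounded)
  moreover have "0 < ereal c" using assms(1) by simp
  ultimately show ?thesis by (rule less_le_trans[rotated])
qed

lemma ld_posD:
  assumes "lower_density B > 0"
  shows "\<exists>c>0. \<exists>N0. \<forall>N\<ge>N0. c * real N \<le> real (card (B \<inter> {1..N}))"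
proof -
  obtain c where c: "0 < ereal c" "ereal c < lower_density B" using ereal_dense2[OF assms] by blast
  have "eventually (\<lambda>N. ereal c < ereal (real (card (B \<inter> {1..N})) / real N)) sequentially"
    using less_LiminfD[OF c(2)[unfolded lower_density_def]] .
  then obtain N0 where N0: "\<And>N. N \<ge> N0 \<Longrightarrow> c < real (card (B \<inter> {1..N})) / real N"
    unfolding eventually_sequentially by auto
  have "\<forall>N\<ge>max N0 1. c * real N \<le> real (card (B \<inter> {1..N}))"
  proof (intro allI impI)
    fix N assume "N \<ge> max N0 1"
    hence "c < real (card (B \<inter> {1..N})) / real N" "real N > 0" using N0 by auto
    thus "c * real N \<le> real (card (B \<inter> {1..N}))" by (simp add: less_divide_eq less_imp_le)
  qed
  moreover have "c > 0" using c(1) by simp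
  ultimately show ?thesis by blast
qed

locale csg =
  fixes C :: "'a::{banach, second_countable_topology} \<Rightarrow> 'a" and W :: "real \<Rightarrow> 'a \<Rightarrow> 'a"
  assumes sg: "C_reg_semigroup C W"
begin

abbreviation T where "T \<equiv> expA C W 1"
abbreviation Dm where "Dm \<equiv> expA_dom C W 1"

lemma C_lin: "bounded_linear C" and C_inj: "inj C"
  and W_lin: "t \<ge> 0 \<Longrightarrow> bounded_linear (W t)"
  and W_cont: "continuous_on {0..} (\<lambda>t. W t x)" and W0: "W 0 = C"
  and W_law: "s \<ge> 0 \<Longrightarrow> t \<ge> 0 \<Longrightarrow> W t (W s x) = C (W (t + s) x)"
  using sg unfolding C_reg_semigroup_def by auto

lemma WC: "t \<ge> 0 \<Longrightarrow> W t (C x) = C (W t x)"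
  using W_law[of 0 t x] W0 by simp

lemma C_eqD: "C a = C b \<Longrightarrow> a = b"
  using C_inj by (rule injD)

lemma expA_eq: "W t x = C z \<Longrightarrow> expA C W t x = z"
  unfolding expA_def using C_inj by (simp add: inv_f_f)

lemma C_expA: "x \<in> expA_dom C W t \<Longrightarrow> C (expA C W t x) = W t x"
  unfolding expA_def expA_dom_def by (auto simp: f_inv_into_f)

lemma W1_expA:
  assumes "t \<ge> 0" "x \<in> expA_dom C W t"
  shows "W 1 (expA C W t x) = W (t + 1) x"
proof (rule C_eqD)
  have "C (W 1 (expA C W t x)) = W 1 (C (expA C W t x))" by (simp add: WC)
  also have "\<dots> = W 1 (W t x)" using C_expA[OF assms(2)] by simp
  also have "\<dots> = C (W (1 + t) x)" using W_law[of t 1 x] assms(1) by simp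
  finally show "C (W 1 (expA C W t x)) = C (W (t + 1) x)" by (simp add: add.commute)
qed

lemma Z_step:
  assumes "y \<in> solution_space C W" "t \<ge> 0"
  shows "expA C W t y \<in> Dm \<and> T (expA C W t y) = expA C W (t + 1) y"
proof -
  have d: "y \<in> expA_dom C W t" "y \<in> expA_dom C W (t + 1)"
    using assms unfolding solution_space_def expA_dom_def by auto
  have e: "W 1 (expA C W t y) = W (t + 1) y" by (rule W1_expA[OF assms(2) d(1)])
  show ?thesis
  proof
    show "expA C W t y \<in> Dm" using e d(2) unfolding expA_dom_def by simp
    show "T (expA C W t y) = expA C W (t + 1) y" unfolding expA_def[of C W 1] e
      by (simp add: expA_def)
  qed
qed

lemma expA_0: "expA C W 0 y = y"
  using expA_eq[of 0 y y] W0 by simp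

lemma Z_iter:
  assumes "y \<in> solution_space C W"
  shows "(T ^^ n) y = expA C W (real n) y \<and> (T ^^ n) y \<in> Dm"
proof (induction n)
  case 0
  show ?case using Z_step[OF assms, of 0] expA_0 by simp
next
  case (Suc n)
  have "(T ^^ Suc n) y = T (expA C W (real n) y)" using Suc by simp
  also have "\<dots> = expA C W (real n + 1) y" using Z_step[OF assms, of "real n"] by simp
  finally have 1: "(T ^^ Suc n) y = expA C W (real (Suc n)) y" by (simp add: add.commute)
  show ?case using 1 Z_step[OF assms, of "real (Suc n)"] by simp
qed

lemma closed_T:
  assumes "u sums U" "\<And>n. u n \<in> Dm" "(\<lambda>n. T (u n)) sums V"
  shows "U \<in> Dm \<and> T U = V"
proof -
  have "(\<lambda>n. W 1 (u n)) sums W 1 U"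
    using bounded_linear.sums[OF W_lin[of 1] assms(1)] by simp
  moreover have "W 1 (u n) = C (T (u n))" for n using C_expA[OF assms(2)[of n]] by simp
  ultimately have s1: "(\<lambda>n. C (T (u n))) sums W 1 U" by simp
  have s2: "(\<lambda>n. C (T (u n))) sums C V"
    using bounded_linear.sums[OF C_lin assms(3)] .
  have eq: "W 1 U = C V" using sums_unique2[OF s1 s2] .
  show ?thesis
  proof
    show "U \<in> Dm" unfolding expA_dom_def using eq by simp
    show "T U = V" using expA_eq[OF eq] .
  qed
qed

lemma C_orbit:
  assumes "\<And>k. (T ^^ k) x \<in> Dm"
  shows "C ((T ^^ n) x) = W (real n) x"
proof (induction n)
  case 0 show ?case using W0 by simp
next
  case (Suc n)
  have "C ((T ^^ Suc n) x) = W 1 ((T ^^ n) x)" using C_expA[OF assms[of n]] by simp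
  moreover have "W 1 ((T ^^ n) x) = W (real n + 1) x"
  proof (rule C_eqD)
    have "C (W 1 ((T ^^ n) x)) = W 1 (C ((T ^^ n) x))" by (simp add: WC)
    also have "\<dots> = W 1 (W (real n) x)" using Suc by simp
    also have "\<dots> = C (W (1 + real n) x)" using W_law[of "real n" 1 x] by simp
    finally show "C (W 1 ((T ^^ n) x)) = C (W (real n + 1) x)" by (simp add: add.commute)
  qed
  ultimately show ?case by (simp add: add.commute)
qed

lemma W_shift:
  assumes "s \<ge> 0" "C z = W (real n) x"
  shows "W (real n + s) x = W s z"
proof (rule C_eqD)
  have "C (W s z) = W s (C z)" using WC[OF assms(1)] by simp
  also have "\<dots> = W s (W (real n) x)" using assms(2) by simp
  also have "\<dots> = C (W (s + real n) x)" using W_law[of "real n" s x] assms(1) by simp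
  finally show "C (W (real n + s) x) = C (W s z)" by (simp add: add.commute)
qed


lemma sg_part:
  assumes C_dense: "closure (range C) = UNIV"
    and xdom: "\<And>k. (T ^^ k) x \<in> Dm"
    and fhc: "\<And>U. open U \<Longrightarrow> U \<noteq> {} \<Longrightarrow> lower_density {n. (T ^^ n) x \<in> U} > 0"
  shows "freq_hypercyclic_sg C W"
proof -
  have eA: "expA C W t (C x) = W t x" if "t \<ge> 0" for t
    using expA_eq[of t "C x" "W t x"] WC[OF that] by simp
  have sol: "C x \<in> solution_space C W"
  proof -
    have "\<forall>t\<ge>0. W t (C x) \<in> range C" using WC by auto
    moreover have "continuous_on {0..} (\<lambda>t. expA C W t (C x)) = continuous_on {0..} (\<lambda>t. W t x)"
      by (rule continuous_on_cong) (auto simp: eA)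
    ultimately show ?thesis using W_cont[of x] unfolding solution_space_def by simp
  qed
  have main: "Liminf at_top (\<lambda>N::real. ereal (measure lborel ({t. t \<ge> 0 \<and> expA C W t (C x) \<in> U} \<inter> {0..N}) / N)) > 0"
    if U: "open U" "U \<noteq> {}" for U
  proof -
    have "U \<inter> range C \<noteq> {}" using open_Int_closure_eq_empty[OF U(1), of "range C"] U(2) C_dense by simp
    then obtain v where v: "C v \<in> U" by blast
    obtain r where r: "r > 0" "ball (C v) r \<subseteq> U" using open_contains_ball U(1) v by blast
    have "\<exists>B>0. \<forall>s\<in>{0..1}. \<forall>z. norm (W s z) \<le> B * norm z"
    proof (rule uniform_bound)
      fix s :: real assume "s \<in> {0..1}" thus "bounded_linear (W s)" by (intro W_lin) simp
    next
      fix z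
      have "continuous_on {0..1} (\<lambda>s. W s z)" by (rule continuous_on_subset[OF W_cont]) auto
      hence "compact ((\<lambda>s. W s z) ` {0..1})" by (rule compact_continuous_image) simp
      hence "bounded ((\<lambda>s. W s z) ` {0..1})" by (rule compact_imp_bounded)
      then obtain B where B: "\<forall>y\<in>(\<lambda>s. W s z) ` {0..1}. norm y \<le> B" unfolding bounded_iff by blast
      show "\<exists>B. \<forall>s\<in>{0..1}. norm (W s z) \<le> B"
        by (rule exI[of _ B]) (use B in blast)
    qed
    then obtain Bd where Bd: "Bd > 0" "\<And>s z. s \<in> {0..1} \<Longrightarrow> norm (W s z) \<le> Bd * norm z" by blast
    have H0: "\<forall>\<epsilon>>0. \<exists>\<delta>>0. \<forall>x'\<in>{0::real..}. dist x' 0 < \<delta> \<longrightarrow> dist (W x' v) (W 0 v) < \<epsilon>"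
      using W_cont[of v] unfolding continuous_on_iff by (rule bspec) simp
    have "r / 2 > 0" using r by simp
    with H0 obtain \<delta>' where \<delta>': "\<delta>' > 0" "\<forall>x'\<in>{0::real..}. dist x' 0 < \<delta>' \<longrightarrow> dist (W x' v) (W 0 v) < r / 2"
      by blast
    define \<delta> where "\<delta> = min (\<delta>' / 2) (1 / 2)"
    have \<delta>pos: "\<delta> > 0" and \<delta>le: "\<delta> \<le> 1 / 2" and \<delta>lt: "\<delta> < \<delta>'"
      unfolding \<delta>_def using \<delta>' by auto
    define V where "V = ball v (r / (2 * Bd))"
    have "r / (2 * Bd) > 0" using r Bd by simp
    hence V: "open V" "V \<noteq> {}" unfolding V_def by auto
    obtain c N0 where c: "c > 0" "\<And>N. N \<ge> N0 \<Longrightarrow> c * real N \<le> real (card ({n. (T ^^ n) x \<in> V} \<inter> {1..N}))"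
      using ld_posD[OF fhc[OF V]] by blast
    have key: "expA C W (real n + s) (C x) \<in> U" if n: "(T ^^ n) x \<in> V" and s: "0 \<le> s" "s \<le> \<delta>" for n s
    proof -
      have s1: "s \<in> {0..1}" using s \<delta>le by simp
      have e1: "expA C W (real n + s) (C x) = W s ((T ^^ n) x)"
        using eA[of "real n + s"] s W_shift[OF s(1) C_orbit[OF xdom]] by simp
      have lin: "bounded_linear (W s)" using W_lin s by simp
      have "dist (W s ((T ^^ n) x)) (W s v) = norm (W s ((T ^^ n) x - v))"
        by (simp add: dist_norm linear_diff[OF bounded_linear.linear[OF lin]])
      also have "\<dots> \<le> Bd * norm ((T ^^ n) x - v)" using Bd(2)[OF s1] .
      also have "\<dots> < Bd * (r / (2 * Bd))"
        using n Bd(1) unfolding V_def by (intro mult_strict_left_mono) (auto simp: dist_norm norm_minus_commute)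
      also have "\<dots> = r / 2" using Bd(1) by simp
      finally have d1: "dist (W s ((T ^^ n) x)) (W s v) < r / 2" .
      have d2: "dist (W s v) (C v) < r / 2" using \<delta>'(2) s \<delta>lt W0 by auto
      have "dist (W s ((T ^^ n) x)) (C v) < r"
        using dist_triangle[of "W s ((T ^^ n) x)" "C v" "W s v"] d1 d2 by linarith
      hence "W s ((T ^^ n) x) \<in> ball (C v) r" by (simp add: dist_commute)
      thus ?thesis using r(2) e1 by auto
    qed
    define A where "A N = {t. t \<ge> 0 \<and> expA C W t (C x) \<in> U} \<inter> {0..N}" for N :: real
    have Afm: "A N \<in> fmeasurable lborel" for N
    proof -
      have "continuous_on {0..N} (\<lambda>t. W t x)" by (rule continuous_on_subset[OF W_cont]) auto
      then obtain G where G: "open G" "G \<inter> {0..N} = (\<lambda>t. W t x) -` U \<inter> {0..N}"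
        using U(1) unfolding continuous_on_open_invariant by blast
      have eqA: "A N = G \<inter> {0..N}" unfolding A_def G(2) using eA by auto
      have ms: "G \<inter> {0..N} \<in> sets lborel" using G(1) by simp
      have fm: "{0..N} \<in> fmeasurable lborel" using fmeasurable_cbox[of 0 N] by simp
      show ?thesis unfolding eqA by (rule fmeasurableI2[OF fm _ ms]) blast
    qed
    have ev: "eventually (\<lambda>N. ereal (c * \<delta> / 2) \<le> ereal (measure lborel (A N) / N)) at_top"
    proof (rule eventually_at_top_linorderI[of "real N0 + 4"])
      fix N :: real assume N: "N \<ge> real N0 + 4"
      define K where "K = nat \<lfloor>N\<rfloor> - 1"
      have fl: "real_of_int \<lfloor>N\<rfloor> \<le> N" "N < real_of_int \<lfloor>N\<rfloor> + 1" by linarith+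
      have fl0: "\<lfloor>N\<rfloor> \<ge> 1" using N by linarith
      have n1: "nat \<lfloor>N\<rfloor> \<ge> 1" using fl0 by linarith
      have n2: "real (nat \<lfloor>N\<rfloor>) = real_of_int \<lfloor>N\<rfloor>" using fl0 by simp
      have "real K = real (nat \<lfloor>N\<rfloor>) - 1" unfolding K_def using n1 by (simp add: of_nat_diff)
      hence rK: "real K = real_of_int \<lfloor>N\<rfloor> - 1" using n2 by simp
      have K1: "real K \<ge> N - 2" "real K + 1 \<le> N" using rK fl by linarith+
      have KN0: "K \<ge> N0" using K1 N by linarith
      define Q where "Q = {n. (T ^^ n) x \<in> V} \<inter> {1..K}"
      define I where "I n = {real n .. real n + \<delta>}" for n :: nat
      have finQ: "finite Q" unfolding Q_def by simp
      have sub: "(\<Union>n\<in>Q. I n) \<subseteq> A N"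
      proof
        fix t assume "t \<in> (\<Union>n\<in>Q. I n)"
        then obtain n where n: "n \<in> Q" "t \<in> I n" by blast
        have nK: "real n \<le> real K" using n(1) unfolding Q_def by simp
        have t: "real n \<le> t" "t \<le> real n + \<delta>" using n(2) unfolding I_def by auto
        have "expA C W (real n + (t - real n)) (C x) \<in> U"
          using key[of n "t - real n"] n(1) t unfolding Q_def by simp
        moreover have "t \<le> N" using t nK K1 \<delta>le by linarith
        ultimately show "t \<in> A N" unfolding A_def using t by simp
      qed
      have mI: "measure lborel (I n) = \<delta>" for n
        unfolding I_def measure_def using \<delta>pos by simp
      have disj: "disjoint_family_on I Q"
        unfolding disjoint_family_on_def
      proof (intro ballI impI)
        fix m n assume mn: "m \<in> Q" "n \<in> Q" "m \<noteq> n"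
        show "I m \<inter> I n = {}"
        proof (cases "m < n")
          case True
          hence "real m + \<delta> < real n" using \<delta>le by linarith
          thus ?thesis unfolding I_def by auto
        next
          case False
          hence "real n + \<delta> < real m" using \<delta>le mn(3) by linarith
          thus ?thesis unfolding I_def by auto
        qed
      qed
      have "measure lborel (\<Union>n\<in>Q. I n) = (\<Sum>n\<in>Q. measure lborel (I n))"
        by (rule measure_finite_Union[OF finQ _ disj]) (auto simp: I_def emeasure_lborel_Icc_eq)
      also have "\<dots> = \<delta> * real (card Q)" using mI by simp
      finally have mU: "measure lborel (\<Union>n\<in>Q. I n) = \<delta> * real (card Q)" .
      have "measure lborel (\<Union>n\<in>Q. I n) \<le> measure lborel (A N)"
        by (rule measure_mono_fmeasurable[OF sub _ Afm]) (auto simp: I_def)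
      hence m1: "\<delta> * real (card Q) \<le> measure lborel (A N)" using mU by simp
      have "c * real K \<le> real (card Q)" using c(2)[OF KN0] unfolding Q_def .
      hence "\<delta> * (c * real K) \<le> \<delta> * real (card Q)" using \<delta>pos by simp
      hence m2: "\<delta> * c * (N - 2) \<le> measure lborel (A N)"
        using m1 K1 c(1) \<delta>pos
        by (smt (verit, ccfv_SIG) mult.assoc mult_left_mono mult_pos_pos)
      have Npos: "N > 0" using N by simp
      have "\<delta> * c * (N / 2) \<le> \<delta> * c * (N - 2)" using N c(1) \<delta>pos by (intro mult_left_mono) auto
      hence "c * \<delta> / 2 * N \<le> measure lborel (A N)" using m2 by (simp add: algebra_simps)
      hence "c * \<delta> / 2 \<le> measure lborel (A N) / N" using Npos by (simp add: le_divide_eq)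
      thus "ereal (c * \<delta> / 2) \<le> ereal (measure lborel (A N) / N)" by simp
    qed
    have "ereal (c * \<delta> / 2) \<le> Liminf at_top (\<lambda>N. ereal (measure lborel (A N) / N))"
      by (rule Liminf_bounded[OF ev])
    moreover have "0 < ereal (c * \<delta> / 2)" using c(1) \<delta>pos by simp
    ultimately show ?thesis unfolding A_def by (rule less_le_trans[rotated])
  qed
  show ?thesis unfolding freq_hypercyclic_sg_def
    by (rule bexI[OF _ sol]) (use main in blast)
qed
end

locale fhc_setting = csg C W for C :: "'a::{banach, second_countable_topology} \<Rightarrow> 'a" and W +
  fixes Y0 :: "'a set" and S :: "'a \<Rightarrow> 'a"
  assumes Y0_sub: "Y0 \<subseteq> solution_space C W"
    and Y0_dense: "closure Y0 = UNIV"
    and S_maps: "\<forall>y\<in>Y0. S y \<in> Y0"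
    and cond1: "\<forall>y\<in>Y0. S y \<in> expA_dom C W 1 \<and> expA C W 1 (S y) = y"
    and cond2: "\<forall>y\<in>Y0. uncond_conv (\<lambda>n. (S ^^ n) y)"
    and cond3: "\<forall>y\<in>Y0. uncond_conv (\<lambda>n. expA C W (real n) y)"
begin

lemma S_iter: "y \<in> Y0 \<Longrightarrow> (S ^^ n) y \<in> Y0"
  by (induction n) (use S_maps in auto)

lemma Y0_Dm: "z \<in> Y0 \<Longrightarrow> z \<in> Dm"
  using Z_iter[of z 0] Y0_sub by auto

lemma TS_le:
  assumes "y \<in> Y0" "k \<le> n"
  shows "(T ^^ k) ((S ^^ n) y) = (S ^^ (n - k)) y"
  using assms(2)
proof (induction k)
  case 0 show ?case by simp
next
  case (Suc k)
  have "(T ^^ Suc k) ((S ^^ n) y) = T ((S ^^ (n - k)) y)" using Suc by simp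
  also have "n - k = Suc (n - Suc k)" using Suc(2) by simp
  also have "T ((S ^^ Suc (n - Suc k)) y) = (S ^^ (n - Suc k)) y"
    using cond1 S_iter[OF assms(1), of "n - Suc k"] by simp
  finally show ?case .
qed

lemma TS_ge:
  assumes "y \<in> Y0" "n \<le> k"
  shows "(T ^^ k) ((S ^^ n) y) = (T ^^ (k - n)) y"
proof -
  have "(T ^^ k) = (T ^^ (k - n)) \<circ> (T ^^ n)" using assms(2) by (simp add: funpow_add[symmetric])
  thus ?thesis using TS_le[OF assms(1) order_refl, of n] by simp
qed

lemma TS_Dm:
  assumes "y \<in> Y0"
  shows "(T ^^ k) ((S ^^ n) y) \<in> Dm"
proof (cases "k \<le> n")
  case True thus ?thesis using TS_le[OF assms True] Y0_Dm S_iter[OF assms] by simp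
next
  case False thus ?thesis using TS_ge[OF assms, of n k] Z_iter[of y "k - n"] Y0_sub assms by auto
qed

definition good :: "'a \<Rightarrow> nat \<Rightarrow> real \<Rightarrow> bool" where
  "good y M \<epsilon> \<longleftrightarrow> (\<forall>F. finite F \<and> F \<subseteq> {M..} \<longrightarrow>
      norm (\<Sum>i\<in>F. (S ^^ i) y) < \<epsilon> \<and> norm (\<Sum>i\<in>F. (T ^^ i) y) < \<epsilon>)"

lemma good_mono: "good y M \<epsilon> \<Longrightarrow> M \<le> M' \<Longrightarrow> good y M' \<epsilon>"
  unfolding good_def by (meson atLeast_subset_iff order_trans)

lemma good_ex:
  assumes "y \<in> Y0" "\<epsilon> > 0"
  shows "\<exists>M. good y M \<epsilon>"
proof -
  obtain N2 where N2: "\<And>F. finite F \<and> F \<subseteq> {1..} \<and> F \<inter> {1..N2} = {} \<Longrightarrow> norm (\<Sum>i\<in>F. (S ^^ i) y) < \<epsilon>"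
    using cond2 assms unfolding uncond_conv_def by blast
  obtain N3 where N3: "\<And>F. finite F \<and> F \<subseteq> {1..} \<and> F \<inter> {1..N3} = {} \<Longrightarrow> norm (\<Sum>i\<in>F. expA C W (real i) y) < \<epsilon>"
    using cond3 assms unfolding uncond_conv_def by blast
  have it: "(T ^^ i) y = expA C W (real i) y" for i using Z_iter[of y i] Y0_sub assms(1) by auto
  have "good y (N2 + N3 + 1) \<epsilon>"
    unfolding good_def
  proof (intro allI impI)
    fix F :: "nat set" assume F: "finite F \<and> F \<subseteq> {N2 + N3 + 1..}"
    have a: "F \<subseteq> {1..}" "F \<inter> {1..N2} = {}" "F \<inter> {1..N3} = {}" using F by auto
    have "norm (\<Sum>i\<in>F. (S ^^ i) y) < \<epsilon>" using N2 a F by blast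
    moreover have "norm (\<Sum>i\<in>F. (T ^^ i) y) < \<epsilon>" using N3 a F unfolding it by blast
    ultimately show "norm (\<Sum>i\<in>F. (S ^^ i) y) < \<epsilon> \<and> norm (\<Sum>i\<in>F. (T ^^ i) y) < \<epsilon>" ..
  qed
  thus ?thesis by (rule exI)
qed

end

locale fhc_constr = fhc_setting C W Y0 S for C :: "'a::{banach, second_countable_topology} \<Rightarrow> 'a" and W Y0 S +
  fixes y :: "nat \<Rightarrow> 'a" and M :: "nat \<Rightarrow> nat"
  assumes yY: "\<And>l. y l \<in> Y0"
    and Mmono: "\<And>l l'. l \<le> l' \<Longrightarrow> M l \<le> M l'"
    and Mge: "\<And>l. l + 1 \<le> M l"
    and Mgood: "\<And>i l. i \<le> l \<Longrightarrow> good (y i) (M l) ((1/4)^l)"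
    and yhit: "\<And>U t. open U \<Longrightarrow> U \<noteq> {} \<Longrightarrow> \<exists>k\<ge>t. y k \<in> U"
begin

sublocale cb: comb "\<lambda>l. 2 * M l"
proof
  fix l show "1 \<le> 2 * M l" using Mge[of l] by simp
qed

abbreviation f where "f \<equiv> cb.ff"
abbreviation v where "v \<equiv> cb.vv"

definition u where "u j = (S ^^ f j) (y (v j))"
definition Z where "Z m j = (T ^^ m) (u j)"

lemma Z_eq: "Z m j = (if m \<le> f j then (S ^^ (f j - m)) (y (v j)) else (T ^^ (m - f j)) (y (v j)))"
  unfolding Z_def u_def using TS_le[OF yY] TS_ge[OF yY] by simp

lemma Z_Dm: "Z m j \<in> Dm"
  unfolding Z_def u_def by (rule TS_Dm[OF yY])

lemma Z_Suc: "T (Z m j) = Z (Suc m) j"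
  unfolding Z_def by simp

lemma f_inj: "f i = f j \<Longrightarrow> i = j"
  using cb.ff_strict_mono by (simp add: strict_mono_eq)

lemma quarter_le: "(1/4::real) ^ (max l q) \<le> (1/2) ^ l * (1/2) ^ q"
proof -
  have "(1/4::real) ^ (max l q) = (1/2) ^ (2 * max l q)"
    by (simp add: power_mult power2_eq_square)
  also have "\<dots> \<le> (1/2) ^ (l + q)" by (rule power_decreasing) auto
  also have "\<dots> = (1/2) ^ l * (1/2) ^ q" by (simp add: power_add)
  finally show ?thesis .
qed

lemma est:
  assumes J: "finite J" and ne: "\<And>j. j \<in> J \<Longrightarrow> f j \<noteq> m"
    and gap: "\<And>j. j \<in> J \<Longrightarrow> M (max (v j) q) \<le> (if m < f j then f j - m else m - f j)"
  shows "norm (\<Sum>j\<in>J. Z m j) \<le> 4 * (1/2) ^ q"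
proof -
  have lvl: "norm (\<Sum>j\<in>{j\<in>J. v j = l}. Z m j) \<le> 2 * ((1/2) ^ l * (1/2) ^ q)" for l
  proof -
    define g where "g = max l q"
    have gd: "good (y l) (M g) ((1/4)^g)" using Mgood[of l g] unfolding g_def by simp
    define Jp where "Jp = {j\<in>J. v j = l \<and> m < f j}"
    define Jm where "Jm = {j\<in>J. v j = l \<and> f j < m}"
    have ne': "\<forall>j\<in>J. f j \<noteq> m" using ne by blast
    have spl: "{j\<in>J. v j = l} = Jp \<union> Jm" unfolding Jp_def Jm_def using ne' by (auto simp: nat_neq_iff)
    have dis: "Jp \<inter> Jm = {}" unfolding Jp_def Jm_def by auto
    have finp: "finite Jp" and finm: "finite Jm" unfolding Jp_def Jm_def using J by auto
    have sp: "(\<Sum>j\<in>{j\<in>J. v j = l}. Z m j) = (\<Sum>j\<in>Jp. Z m j) + (\<Sum>j\<in>Jm. Z m j)"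
      unfolding spl by (rule sum.union_disjoint[OF finp finm dis])
    have p1: "(\<Sum>j\<in>Jp. Z m j) = (\<Sum>j\<in>Jp. (S ^^ (f j - m)) (y l))"
      by (rule sum.cong) (auto simp: Jp_def Z_eq)
    have injp: "inj_on (\<lambda>j. f j - m) Jp"
    proof (rule inj_onI)
      fix a b assume ab: "a \<in> Jp" "b \<in> Jp" "f a - m = f b - m"
      hence "f a = f b" unfolding Jp_def by auto
      thus "a = b" by (rule f_inj)
    qed
    have p2: "(\<Sum>j\<in>Jp. (S ^^ (f j - m)) (y l)) = (\<Sum>i\<in>(\<lambda>j. f j - m) ` Jp. (S ^^ i) (y l))"
      by (simp add: sum.reindex[OF injp])
    have subp: "(\<lambda>j. f j - m) ` Jp \<subseteq> {M g..}"
    proof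
      fix i assume "i \<in> (\<lambda>j. f j - m) ` Jp"
      then obtain j where j: "j \<in> Jp" "i = f j - m" by blast
      have "M (max (v j) q) \<le> f j - m" using gap[of j] j(1) unfolding Jp_def by auto
      moreover have "v j = l" using j(1) unfolding Jp_def by simp
      ultimately show "i \<in> {M g..}" using j(2) unfolding g_def by simp
    qed
    have np: "norm (\<Sum>j\<in>Jp. Z m j) < (1/4)^g"
      using gd finp subp unfolding good_def p1 p2 by blast
    have m1: "(\<Sum>j\<in>Jm. Z m j) = (\<Sum>j\<in>Jm. (T ^^ (m - f j)) (y l))"
      by (rule sum.cong) (auto simp: Jm_def Z_eq)
    have injm: "inj_on (\<lambda>j. m - f j) Jm"
    proof (rule inj_onI)
      fix a b assume ab: "a \<in> Jm" "b \<in> Jm" "m - f a = m - f b"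
      hence "f a = f b" unfolding Jm_def by auto
      thus "a = b" by (rule f_inj)
    qed
    have m2: "(\<Sum>j\<in>Jm. (T ^^ (m - f j)) (y l)) = (\<Sum>i\<in>(\<lambda>j. m - f j) ` Jm. (T ^^ i) (y l))"
      by (simp add: sum.reindex[OF injm])
    have subm: "(\<lambda>j. m - f j) ` Jm \<subseteq> {M g..}"
    proof
      fix i assume "i \<in> (\<lambda>j. m - f j) ` Jm"
      then obtain j where j: "j \<in> Jm" "i = m - f j" by blast
      have "M (max (v j) q) \<le> m - f j" using gap[of j] j(1) unfolding Jm_def by auto
      moreover have "v j = l" using j(1) unfolding Jm_def by simp
      ultimately show "i \<in> {M g..}" using j(2) unfolding g_def by simp
    qed
    have nm: "norm (\<Sum>j\<in>Jm. Z m j) < (1/4)^g"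
      using gd finm subm unfolding good_def m1 m2 by blast
    have "norm (\<Sum>j\<in>{j\<in>J. v j = l}. Z m j) \<le> norm (\<Sum>j\<in>Jp. Z m j) + norm (\<Sum>j\<in>Jm. Z m j)"
      unfolding sp by (rule norm_triangle_ineq)
    also have "\<dots> \<le> 2 * (1/4)^g" using np nm by simp
    also have "\<dots> \<le> 2 * ((1/2) ^ l * (1/2) ^ q)" unfolding g_def using quarter_le by simp
    finally show ?thesis .
  qed
  have "(\<Sum>j\<in>J. Z m j) = (\<Sum>l\<in>v ` J. \<Sum>j\<in>{j\<in>J. v j = l}. Z m j)"
    by (rule sum.image_gen[OF J])
  hence "norm (\<Sum>j\<in>J. Z m j) \<le> (\<Sum>l\<in>v ` J. norm (\<Sum>j\<in>{j\<in>J. v j = l}. Z m j))"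
    by (simp add: norm_sum)
  also have "\<dots> \<le> (\<Sum>l\<in>v ` J. 2 * ((1/2) ^ l * (1/2) ^ q))"
    by (rule sum_mono) (rule lvl)
  also have "\<dots> = 2 * (1/2) ^ q * (\<Sum>l\<in>v ` J. (1/2) ^ l)"
    by (simp add: sum_distrib_left algebra_simps)
  also have "\<dots> \<le> 2 * (1/2) ^ q * 2"
  proof (rule mult_left_mono)
    have "(\<Sum>l\<in>v ` J. (1/2::real) ^ l) \<le> (\<Sum>l. (1/2::real) ^ l)"
      by (rule sum_le_suminf) (use J in auto)
    also have "(\<Sum>l. (1/2::real) ^ l) = 2" using suminf_geometric[of "1/2::real"] by simp
    finally show "(\<Sum>l\<in>v ` J. (1/2::real) ^ l) \<le> 2" .
  qed simp
  finally show ?thesis by simp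
qed


lemma Z_summable: "summable (Z m)"
  unfolding summable_Cauchy
proof (intro allI impI)
  fix e :: real assume e: "e > 0"
  obtain q0 where q0: "(1/2::real)^q0 < e/4" using real_arch_pow_inv[of "e/4" "1/2"] e by auto
  define q where "q = max q0 m"
  have "(1/2::real)^q \<le> (1/2)^q0" unfolding q_def by (rule power_decreasing) auto
  hence qe: "4 * (1/2::real)^q < e" using q0 by linarith
  define N where "N = m + M q + 1"
  have "\<forall>n\<ge>N. \<forall>k. norm (sum (Z m) {n..<k}) < e"
  proof (intro allI impI)
    fix n k assume n: "n \<ge> N"
    have "norm (\<Sum>j\<in>{n..<k}. Z m j) \<le> 4*(1/2)^q"
    proof (rule est)
      fix j assume j: "j \<in> {n..<k}"
      have fj: "j \<le> f j" using strict_mono_imp_increasing[OF cb.ff_strict_mono] .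
      hence fjN: "f j \<ge> N" using j n by simp
      show "f j \<noteq> m" using fjN unfolding N_def by simp
      show "M (max (v j) q) \<le> (if m < f j then f j - m else m - f j)"
      proof (cases "v j \<le> q")
        case True
        hence "max (v j) q = q" by simp
        thus ?thesis using fjN unfolding N_def by simp
      next
        case False
        hence mx: "max (v j) q = v j" by simp
        have "2 * M (v j) \<le> f j" using cb.ff_ge[of j] by simp
        moreover have "M (v j) \<ge> m" using Mge[of "v j"] False unfolding q_def by simp
        moreover have "m < f j" using fjN unfolding N_def by simp
        ultimately show ?thesis using mx by simp
      qed
    qed simp
    thus "norm (sum (Z m) {n..<k}) < e" using qe by linarith
  qed
  thus "\<exists>N. \<forall>n\<ge>N. \<forall>k. norm (sum (Z m) {n..<k}) < e" by blast
qed

definition x where "x = suminf u"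

lemma Z_Suc_sums: "(\<lambda>n. T (Z m n)) sums suminf (Z (Suc m))"
  using summable_sums[OF Z_summable[of "Suc m"]] by (simp add: Z_Suc)

lemma orbit_sums: "Z m sums (T ^^ m) x"
proof (induction m)
  case 0
  have "Z 0 = u" unfolding Z_def by (rule ext) simp
  thus ?case using summable_sums[OF Z_summable[of 0]] unfolding x_def by simp
next
  case (Suc m)
  have "(T ^^ m) x \<in> Dm \<and> T ((T ^^ m) x) = suminf (Z (Suc m))"
    by (rule closed_T[OF Suc Z_Dm Z_Suc_sums])
  thus ?case using summable_sums[OF Z_summable[of "Suc m"]] by simp
qed

lemma orbit_Dm: "(T ^^ m) x \<in> Dm"
  using closed_T[OF orbit_sums Z_Dm Z_Suc_sums, of m] by simp

lemma hit: "norm ((T ^^ f j0) x - y (v j0)) \<le> 4 * (1/2) ^ (v j0)"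
proof -
  define m where "m = f j0"
  define k where "k = v j0"
  have Z0: "Z m j0 = y k" unfolding m_def k_def Z_eq by simp
  define Z' where "Z' j = (if j \<noteq> j0 then Z m j else 0)" for j
  have "(\<lambda>j. Z m j - (if j = j0 then y k else 0)) sums ((T ^^ m) x - y k)"
    using sums_diff[OF orbit_sums[of m] sums_single[of j0 "\<lambda>_. y k"]] by simp
  moreover have "(\<lambda>j. Z m j - (if j = j0 then y k else 0)) = Z'"
    unfolding Z'_def using Z0 by (intro ext) auto
  ultimately have sZ: "Z' sums ((T ^^ m) x - y k)" by simp
  have bnd: "norm (\<Sum>j<n. Z' j) \<le> 4 * (1/2)^k" for n
  proof -
    have "(\<Sum>j<n. Z' j) = (\<Sum>j\<in>{j\<in>{..<n}. j \<noteq> j0}. Z m j)"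
      unfolding Z'_def by (rule sum.inter_filter[symmetric]) simp
    also have "norm \<dots> \<le> 4*(1/2)^k"
    proof (rule est)
      fix j assume j: "j \<in> {j\<in>{..<n}. j \<noteq> j0}"
      hence jn: "j \<noteq> j0" by simp
      show "f j \<noteq> m" using jn f_inj unfolding m_def by blast
      have mx: "M (max (v j) k) \<le> M (v j) + M k" by (cases "v j \<le> k") (auto simp: max_def)
      show "M (max (v j) k) \<le> (if m < f j then f j - m else m - f j)"
      proof (cases "j0 < j")
        case True
        have s: "f j0 + 2 * M (v j0) + 2 * M (v j) \<le> f j" using cb.ff_sep[OF True] by simp
        thus ?thesis using mx unfolding m_def k_def by auto
      next
        case False
        hence "j < j0" using jn by simp
        have s: "f j + 2 * M (v j) + 2 * M (v j0) \<le> f j0" using cb.ff_sep[OF \<open>j < j0\<close>] by simp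
        thus ?thesis using mx unfolding m_def k_def by auto
      qed
    qed simp
    finally show ?thesis .
  qed
  from sZ have "(\<lambda>n. \<Sum>j<n. Z' j) \<longlonglongrightarrow> ((T ^^ m) x - y k)" by (simp add: sums_def)
  hence "(\<lambda>n. norm (\<Sum>j<n. Z' j)) \<longlonglongrightarrow> norm ((T ^^ m) x - y k)" by (rule tendsto_norm)
  hence "norm ((T ^^ m) x - y k) \<le> 4 * (1/2)^k"
    by (rule LIMSEQ_le_const2) (use bnd in blast)
  thus ?thesis unfolding m_def k_def .
qed

lemma fhc_x:
  assumes U: "open U" "U \<noteq> {}"
  shows "lower_density {n. (T ^^ n) x \<in> U} > 0"
proof -
  obtain u0 where u0: "u0 \<in> U" using U(2) by blast
  obtain r where r: "r > 0" "ball u0 r \<subseteq> U" using open_contains_ball U(1) u0 by blast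
  obtain t where t: "(1/2::real)^t < r / 8" using real_arch_pow_inv[of "r/8" "1/2"] r by auto
  have "open (ball u0 (r/2))" "ball u0 (r/2) \<noteq> {}" using r by auto
  then obtain k where k: "k \<ge> t" "y k \<in> ball u0 (r/2)" using yhit by blast
  have "(1/2::real)^k \<le> (1/2)^t" using k(1) by (intro power_decreasing) auto
  hence kb: "4 * (1/2::real)^k < r/2" using t by linarith
  have inU: "(T ^^ f j) x \<in> U" if vj: "v j = k" for j
  proof -
    have "dist ((T ^^ f j) x) (y k) < r/2" using hit[of j] vj kb by (simp add: dist_norm)
    moreover have "dist (y k) u0 < r/2" using k(2) by (simp add: dist_commute)
    ultimately have "dist ((T ^^ f j) x) u0 < r" using dist_triangle[of "(T ^^ f j) x" u0 "y k"] by linarith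
    hence "(T ^^ f j) x \<in> ball u0 r" by (simp add: dist_commute)
    thus ?thesis using r(2) by blast
  qed
  obtain c N0 where c: "c > 0" "\<forall>N\<ge>N0. c * real N \<le> real (card {j. v j = k \<and> f j \<le> N})"
    using cb.density_level[of k] by blast
  show ?thesis
  proof (rule ld_pos[OF c(1)])
    fix N assume N: "N \<ge> N0"
    have sub: "f ` {j. v j = k \<and> f j \<le> N} \<subseteq> {n. (T ^^ n) x \<in> U} \<inter> {1..N}"
    proof
      fix n assume "n \<in> f ` {j. v j = k \<and> f j \<le> N}"
      then obtain j where j: "v j = k" "f j \<le> N" "n = f j" by blast
      have "2 * M (v j) \<le> f j" using cb.ff_ge[of j] by simp
      hence "1 \<le> f j" using Mge[of "v j"] by simp
      thus "n \<in> {n. (T ^^ n) x \<in> U} \<inter> {1..N}" using inU[OF j(1)] j by simp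
    qed
    have inj: "inj_on f {j. v j = k \<and> f j \<le> N}"
      by (rule inj_onI) (rule f_inj)
    have "card (f ` {j. v j = k \<and> f j \<le> N}) = card {j. v j = k \<and> f j \<le> N}"
      by (rule card_image[OF inj])
    moreover have "card (f ` {j. v j = k \<and> f j \<le> N}) \<le> card ({n. (T ^^ n) x \<in> U} \<inter> {1..N})"
      by (rule card_mono[OF _ sub]) simp
    ultimately have "card {j. v j = k \<and> f j \<le> N} \<le> card ({n. (T ^^ n) x \<in> U} \<inter> {1..N})" by simp
    hence "real (card {j. v j = k \<and> f j \<le> N}) \<le> real (card ({n. (T ^^ n) x \<in> U} \<inter> {1..N}))" by simp
    thus "c * real N \<le> real (card ({n. (T ^^ n) x \<in> U} \<inter> {1..N}))" using c(2) N by force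
  qed
qed
end

context fhc_setting begin

lemma op_part: "\<exists>x. (\<forall>k. (T ^^ k) x \<in> Dm) \<and> (\<forall>U. open U \<and> U \<noteq> {} \<longrightarrow> lower_density {n. (T ^^ n) x \<in> U} > 0)"
proof -
  obtain d :: "nat \<Rightarrow> 'a" where d: "\<forall>i. d i \<in> Y0" "\<forall>U. open U \<and> U \<noteq> {} \<longrightarrow> (\<exists>i. d i \<in> U)"
    using dense_seq[OF Y0_dense] by blast
  define y where "y l = d (fst (prod_decode l))" for l
  have yY: "y l \<in> Y0" for l unfolding y_def using d(1) by simp
  have yhit: "\<exists>k\<ge>t. y k \<in> U" if U: "open U" "U \<noteq> {}" for U t
  proof -
    have "\<exists>i. d i \<in> U" using d(2) U by blast
    then obtain i where i: "d i \<in> U" by blast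
    have "y (prod_encode (i, t)) = d i" unfolding y_def by simp
    moreover have "t \<le> prod_encode (i, t)" by (rule le_prod_encode_2)
    ultimately have "prod_encode (i, t) \<ge> t \<and> y (prod_encode (i, t)) \<in> U" using i by simp
    thus ?thesis by (rule exI)
  qed
  define thr where "thr i l = (SOME M. good (y i) M ((1/4)^l))" for i l
  have thr: "good (y i) (thr i l) ((1/4)^l)" for i l
    unfolding thr_def by (rule someI_ex[OF good_ex[OF yY]]) simp
  define M where "M l = l + 1 + (\<Sum>i\<le>l. \<Sum>j\<le>l. thr i j)" for l
  have Mmono: "M l \<le> M l'" if "l \<le> l'" for l l'
  proof -
    have "(\<Sum>i\<le>l. \<Sum>j\<le>l. thr i j) \<le> (\<Sum>i\<le>l. \<Sum>j\<le>l'. thr i j)"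
      by (intro sum_mono sum_mono2) (use that in auto)
    also have "\<dots> \<le> (\<Sum>i\<le>l'. \<Sum>j\<le>l'. thr i j)" by (rule sum_mono2) (use that in auto)
    finally show ?thesis unfolding M_def using that by simp
  qed
  have Mge: "l + 1 \<le> M l" for l unfolding M_def by simp
  have Mgood: "good (y i) (M l) ((1/4)^l)" if "i \<le> l" for i l
  proof (rule good_mono[OF thr])
    have "thr i l \<le> (\<Sum>j\<le>l. thr i j)" by (rule member_le_sum) auto
    also have "\<dots> \<le> (\<Sum>i'\<le>l. \<Sum>j\<le>l. thr i' j)"
      by (rule member_le_sum[where f = "\<lambda>i'. \<Sum>j\<le>l. thr i' j"]) (use that in auto)
    finally show "thr i l \<le> M l" unfolding M_def by simp
  qed
  interpret fc: fhc_constr C W Y0 S y M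
    by unfold_locales (use yY Mmono Mge Mgood yhit sg Y0_sub Y0_dense S_maps cond1 cond2 cond3 in auto)
  show ?thesis using fc.orbit_Dm fc.fhc_x by blast
qed

end

theorem theorem3p6:
  fixes C :: "'a::{banach, second_countable_topology} \<Rightarrow> 'a"
    and W :: "real \<Rightarrow> 'a \<Rightarrow> 'a"
    and Y0 :: "'a set"
    and S :: "'a \<Rightarrow> 'a"
  assumes sg: "C_reg_semigroup C W"
    and Y0_sub: "Y0 \<subseteq> solution_space C W"
    and Y0_dense: "closure Y0 = UNIV"
    and S_maps: "\<forall>y\<in>Y0. S y \<in> Y0"
    and cond1: "\<forall>y\<in>Y0. S y \<in> expA_dom C W 1 \<and> expA C W 1 (S y) = y"
    and cond2: "\<forall>y\<in>Y0. uncond_conv (\<lambda>n. (S ^^ n) y)"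
    and cond3: "\<forall>y\<in>Y0. uncond_conv (\<lambda>n. expA C W (real n) y)"
    and C_dense: "closure (range C) = UNIV"
  shows "freq_hypercyclic_op (expA_dom C W 1) (expA C W 1) \<and> freq_hypercyclic_sg C W"
proof -
  interpret fs: fhc_setting C W Y0 S
    by unfold_locales (use sg Y0_sub Y0_dense S_maps cond1 cond2 cond3 in auto)
  obtain x where x: "\<forall>k. (expA C W 1 ^^ k) x \<in> expA_dom C W 1"
      "\<forall>U. open U \<and> U \<noteq> {} \<longrightarrow> lower_density {n. (expA C W 1 ^^ n) x \<in> U} > 0"
    using fs.op_part by blast
  have op: "freq_hypercyclic_op (expA_dom C W 1) (expA C W 1)"
    unfolding freq_hypercyclic_op_def
  proof (rule bexI[of _ x])
    show "x \<in> expA_dom C W 1" using x(1)[rule_format, of 0] by simp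
    show "(\<forall>n\<ge>1. (expA C W 1 ^^ n) x \<in> expA_dom C W 1) \<and>
      (\<forall>U. open U \<and> U \<noteq> {} \<longrightarrow> 0 < lower_density {n. (expA C W 1 ^^ n) x \<in> U})"
      using x by blast
  qed
  have sgp: "freq_hypercyclic_sg C W"
    by (rule fs.sg_part[OF C_dense]) (use x in auto)
  show ?thesis using op sgp by (rule conjI)
qed

end
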